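(* Let $n > 3$ be a real number. Then $\cos^n x < 1 - \sin x$ for all real $x$ with $\frac{2\pi}{n+1} \leq x < \frac{\pi}{2}$. *)

theory Defs
  imports Complex_Main
begin

end

theory Submission
  imports Defs "HOL-Analysis.Analysis"
begin

lemma cos_lb2: fixes x :: real assumes "x \<ge> 0" shows "1 - x^2/2 \<le> cos x"
proof -
  let ?f = "\<lambda>x::real. cos x - 1 + x^2/2"
  have "?f 0 \<le> ?f x"
  proof (rule DERIV_nonneg_imp_nondecreasing[OF assms])
    fix u :: real assume u: "0 \<le> u" "u \<le> x"
    have "(?f has_real_derivative (u - sin u)) (at u)"
      by (auto intro!: derivative_eq_intros simp: field_simps)
    moreover have "0 \<le> u - sin u" using sin_x_le_x[OF u(1)] by simp
    ultimately show "\<exists>y. (?f has_real_derivative y) (at u) \<and> 0 \<le> y" by blast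
  qed
  then show ?thesis by simp
qed

lemma sin_lb3: fixes x :: real assumes "x \<ge> 0" shows "x - x^3/6 \<le> sin x"
proof -
  let ?f = "\<lambda>x::real. sin x - x + x^3/6"
  have "?f 0 \<le> ?f x"
  proof (rule DERIV_nonneg_imp_nondecreasing[OF assms])
    fix u :: real assume u: "0 \<le> u" "u \<le> x"
    have "(?f has_real_derivative (cos u - 1 + u^2/2)) (at u)"
      by (auto intro!: derivative_eq_intros simp: field_simps power2_eq_square)
    moreover have "0 \<le> cos u - 1 + u^2/2" using cos_lb2[OF u(1)] by simp
    ultimately show "\<exists>y. (?f has_real_derivative y) (at u) \<and> 0 \<le> y" by blast
  qed
  then show ?thesis by simp
qed

lemma cos_ub4: fixes x :: real assumes "x \<ge> 0" shows "cos x \<le> 1 - x^2/2 + x^4/24"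
proof -
  let ?f = "\<lambda>x::real. 1 - x^2/2 + x^4/24 - cos x"
  have "?f 0 \<le> ?f x"
  proof (rule DERIV_nonneg_imp_nondecreasing[OF assms])
    fix u :: real assume u: "0 \<le> u" "u \<le> x"
    have "(?f has_real_derivative (sin u - u + u^3/6)) (at u)"
      by (auto intro!: derivative_eq_intros simp: field_simps power2_eq_square)
    moreover have "0 \<le> sin u - u + u^3/6" using sin_lb3[OF u(1)] by simp
    ultimately show "\<exists>y. (?f has_real_derivative y) (at u) \<and> 0 \<le> y" by blast
  qed
  then show ?thesis by simp
qed

theorem mainTheorem2:
  fixes n x :: real
  assumes "n > 3"
    and "2 * pi / (n + 1) \<le> x" and "x < pi / 2"
  shows "cos x powr n < 1 - sin x"
proof -
  define c where "c = cos x"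
  define s where "s = sin x"
  have x0: "x > 0"
    proof -
    have "2*pi/(n+1) > 0" using assms(1) by simp
    thus ?thesis using assms(2) by linarith
  qed
  have c0: "c > 0" unfolding c_def using x0 assms(3) by (intro cos_gt_zero) auto
  have s0: "s > 0" unfolding s_def using x0 assms(3) by (intro sin_gt_zero) auto
  have c1: "c < 1" unfolding c_def using x0 assms(3) pi_gt3
    using cos_monotone_0_pi[of 0 x] by simp
  have cs: "c^2 + s^2 = 1" unfolding c_def s_def by simp
  have s1: "s < 1"
  proof -
    have "c^2 > 0" using c0 by simp
    hence "s^2 < 1" using cs by linarith
    hence "s^2 < 1^2" by simp
    thus ?thesis using s0 power_less_imp_less_base[of s 2 1] by simp
  qed
  have key: "c powr (n-2) * (1+s) < 1"
  proof (cases "x \<ge> 6/5")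
    case True
    have "c powr (n-2) < c powr 1" using c0 c1 assms(1) by (intro powr_less_mono') auto
    hence A: "c powr (n-2) < c" using c0 by simp
    have "cos x \<le> cos (6/5)" using True assms(3) pi_gt3
      by (intro cos_monotone_0_pi_le) auto
    also have "\<dots> \<le> 1 - (6/5)^2/2 + (6/5)^4/24" by (rule cos_ub4) simp
    finally have "c < 1/2" unfolding c_def by (simp add: power2_eq_square power4_eq_xxxx)
    moreover have "2 * c * s \<le> 1"
    proof -
      have "0 \<le> (c-s)^2" by simp
      thus ?thesis using cs unfolding power2_diff by linarith
    qed
    ultimately have "c * (1+s) < 1" by (simp add: algebra_simps)
    moreover have "c powr (n-2) * (1+s) < c * (1+s)" using A s0 by simp
    ultimately show ?thesis by simp
  next
    case False
    define a where "a = 1 - c"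
    define m where "m = n - 2"
    have m0: "m > 1" using assms(1) unfolding m_def by simp
    have "ln c \<le> -a" using ln_le_minus_one[OF c0] unfolding a_def by simp
    hence "m * ln c \<le> m * (-a)" using m0 by (intro mult_left_mono) auto
    hence "exp (m * ln c) \<le> exp (-(m*a))" by simp
    moreover have "c powr m = exp (m * ln c)" using c0 by (simp add: powr_def)
    ultimately have E: "c powr m \<le> exp (-(m*a))" by simp
    have a4: "a \<ge> x^2/2 - x^4/24" unfolding a_def c_def using cos_ub4[of x] x0 by simp
    have nx: "m*x \<ge> 2*pi - 3*x"
    proof -
      have np: "n+1 > 0" using assms(1) by simp
      have "2*pi/(n+1) * (n+1) \<le> x*(n+1)" using mult_right_mono[OF assms(2), of "n+1"] np by linarith
      moreover have "2*pi/(n+1) * (n+1) = 2*pi" using np by simp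
      ultimately have "2*pi \<le> x*(n+1)" by linarith
      thus ?thesis unfolding m_def by (simp add: algebra_simps)
    qed
    have p1: "2*pi - 3*x \<ge> 12/5" using False pi_gt3 by simp
    have xx: "x*x \<le> (6/5)*(6/5)" using False x0 by (intro mult_mono) auto
    have p2: "12 - x^2 \<ge> 264/25" using xx by (simp add: power2_eq_square)
    have "(12/5) * (264/25) \<le> (2*pi - 3*x) * (12 - x^2)"
      using p1 p2 by (intro mult_mono) auto
    hence P: "(2*pi - 3*x) * (12 - x^2) > 24" by simp
    have q0: "x * (12 - x^2) / 24 \<ge> 0" using x0 p2 by simp
    have "m*a \<ge> m * (x^2/2 - x^4/24)" using a4 m0 by (intro mult_left_mono) auto
    moreover have "m * (x^2/2 - x^4/24) = (m*x) * (x * (12 - x^2) / 24)"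
      by (simp add: algebra_simps power2_eq_square power4_eq_xxxx)
    moreover have "(m*x) * (x * (12 - x^2) / 24) \<ge> (2*pi - 3*x) * (x * (12 - x^2) / 24)"
      using nx q0 by (rule mult_right_mono)
    moreover have "(2*pi - 3*x) * (x * (12 - x^2) / 24) = x * ((2*pi - 3*x) * (12 - x^2) / 24)"
      by simp
    moreover have "x * ((2*pi - 3*x) * (12 - x^2) / 24) > x * 1"
      using P x0 by (intro mult_strict_left_mono) auto
    moreover have "s \<le> x" unfolding s_def using sin_x_le_x x0 by simp
    ultimately have sa: "s < m*a" by linarith
    have "exp (-(m*a)) * (1+s) < exp (-(m*a)) * (1 + m*a)" using sa by simp
    also have "\<dots> \<le> exp (-(m*a)) * exp (m*a)"
      by (intro mult_left_mono) auto
    also have "\<dots> = 1" by (simp add: exp_minus)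
    finally have "exp (-(m*a)) * (1+s) < 1" .
    moreover have "c powr m * (1+s) \<le> exp (-(m*a)) * (1+s)" using E s0 by (intro mult_right_mono) auto
    ultimately have "c powr m * (1+s) < 1" by linarith
    thus ?thesis unfolding m_def .
  qed
  have "c powr n = c powr (2 + (n-2))" by simp
  also have "\<dots> = c powr 2 * c powr (n-2)" by (rule powr_add)
  also have "c powr 2 = c^2" using c0 by simp
  also have "c^2 * c powr (n-2) < c^2 / (1+s)"
  proof -
    have "c^2 * (c powr (n-2) * (1+s)) < c^2 * 1" using key c0 by (intro mult_strict_left_mono) auto
    hence "(c^2 * c powr (n-2)) * (1+s) < c^2" by (simp add: mult.assoc)
    thus ?thesis using s0 by (subst pos_less_divide_eq) auto
  qed
  also have "c^2 / (1+s) = 1 - s"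
  proof -
    have "c^2 = 1 - s^2" using cs by simp
    also have "\<dots> = (1-s)*(1+s)" by (simp add: power2_eq_square algebra_simps)
    finally show ?thesis using s0 by simp
  qed
  finally show ?thesis unfolding c_def s_def .
qed

end
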